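(* For $n\ge5$ and $k\ge4$, \[a^\circ_{n,k}(1342)=a^\circ_{n-1,k}(1342)+b^\circ_{n,k}(1342)+\sum_{r=3}^{n-1}b^\circ_{r,k-1}(1342),\] where $a^\circ_{m,j}(1342)$ is the number of cyclic permutations $\pi\in\mathfrak S_m$ whose one-line notation avoids $\delta_j=j(j-1)\cdots21$ and such that every cyclic rotation of $C(\pi)$ avoids $1342$, and $b^\circ_{m,j}(1342)$ is the number of those with additionally $\pi_1=m$.
   Context: A permutation $\pi\in\mathfrak S_n$ is cyclic if it consists of a single $n$-cycle. For cyclic $\pi$, $C(\pi)=(1,c_2,\dots,c_n)$ with $c_2=\pi(1)$, $c_{i+1}=\pi(c_i)$; its cyclic rotations are the sequences $c_ic_{i+1}\cdots c_nc_1\cdots c_{i-1}$ (with $c_1=1$). A sequence avoids a pattern $\sigma\in\mathfrak S_m$ if no subsequence of length $m$ is in the same relative order as $\sigma$. The one-line notation of $\pi$ is $\pi_1\cdots\pi_n$, $\pi_i=\pi(i)$. *)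

theory Defs
  imports "HOL-Combinatorics.Permutations"
begin

text \<open>Permutations of {1..n} are functions nat => nat with pi permutes {1..n}.\<close>

definition one_line :: "nat \<Rightarrow> (nat \<Rightarrow> nat) \<Rightarrow> nat list" where
  "one_line n \<pi> = map \<pi> [1..<n+1]"

definition cyclic_perm :: "nat \<Rightarrow> (nat \<Rightarrow> nat) \<Rightarrow> bool" where
  "cyclic_perm n \<pi> \<longleftrightarrow> \<pi> permutes {1..n} \<and> {(\<pi> ^^ k) 1 | k. True} = {1..n}"

definition cycle_form :: "nat \<Rightarrow> (nat \<Rightarrow> nat) \<Rightarrow> nat list" where
  "cycle_form n \<pi> = map (\<lambda>i. (\<pi> ^^ i) 1) [0..<n]"

definition cyclic_rotations :: "nat \<Rightarrow> (nat \<Rightarrow> nat) \<Rightarrow> nat list set" where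
  "cyclic_rotations n \<pi> = {rotate i (cycle_form n \<pi>) | i. i < n}"

definition contains_pattern :: "nat list \<Rightarrow> nat list \<Rightarrow> bool" where
  "contains_pattern xs \<sigma> \<longleftrightarrow>
     (\<exists>idx. length idx = length \<sigma> \<and> sorted_wrt (<) idx \<and> (\<forall>i\<in>set idx. i < length xs) \<and>
        (\<forall>i<length \<sigma>. \<forall>j<length \<sigma>. xs ! (idx ! i) < xs ! (idx ! j) \<longleftrightarrow> \<sigma> ! i < \<sigma> ! j))"

definition avoids :: "nat list \<Rightarrow> nat list \<Rightarrow> bool" where
  "avoids xs \<sigma> \<longleftrightarrow> \<not> contains_pattern xs \<sigma>"

definition delta :: "nat \<Rightarrow> nat list" where
  "delta j = rev [1..<j+1]"

definition cyc_avoiders :: "nat \<Rightarrow> nat \<Rightarrow> (nat \<Rightarrow> nat) set" where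
  "cyc_avoiders m j = {\<pi>. cyclic_perm m \<pi> \<and> avoids (one_line m \<pi>) (delta j) \<and>
       (\<forall>w\<in>cyclic_rotations m \<pi>. avoids w [1,3,4,2])}"

definition a_circ_1342 :: "nat \<Rightarrow> nat \<Rightarrow> nat" where
  "a_circ_1342 m j = card (cyc_avoiders m j)"

definition b_circ_1342 :: "nat \<Rightarrow> nat \<Rightarrow> nat" where
  "b_circ_1342 m j = card {\<pi> \<in> cyc_avoiders m j. \<pi> 1 = m}"

end

theory Submission
  imports Defs
begin

definition CW :: "nat \<Rightarrow> nat list set" where
  "CW n = {c. distinct c \<and> set c = {1..n} \<and> length c = n \<and> c ! 0 = 1}"

definition perm_of :: "nat list \<Rightarrow> nat \<Rightarrow> nat" where
  "perm_of c x = (case map_of (zip c (rotate1 c)) x of None \<Rightarrow> x | Some y \<Rightarrow> y)"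

lemma perm_of_nth:
  assumes "distinct c" "i < length c"
  shows "perm_of c (c ! i) = c ! (Suc i mod length c)"
  using assms map_of_zip_nth[of c "rotate1 c" i] nth_rotate1[of i c]
  by (simp add: perm_of_def)

lemma perm_of_out:
  assumes "x \<notin> set c" shows "perm_of c x = x"
proof -
  have "map_of (zip c (rotate1 c)) x = None"
    using assms by (force dest: set_zip_leftD simp: map_of_eq_None_iff)
  then show ?thesis unfolding perm_of_def by (metis option.simps(4))
qed

lemma CW_len: "c \<in> CW n \<Longrightarrow> length c = n" by (simp add: CW_def)

lemma perm_of_pow:
  assumes "c \<in> CW n" "n > 0"
  shows "(perm_of c ^^ i) 1 = c ! (i mod n)"
proof (induction i)
  case 0 then show ?case using assms by (simp add: CW_def)
next
  case (Suc i)
  have "(perm_of c ^^ Suc i) 1 = perm_of c (c ! (i mod n))" using Suc by simp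
  also have "\<dots> = c ! (Suc (i mod n) mod n)"
    using assms perm_of_nth[of c "i mod n"] by (simp add: CW_def)
  also have "\<dots> = c ! (Suc i mod n)" by (simp add: mod_Suc_eq)
  finally show ?case .
qed

lemma cycle_form_perm_of:
  assumes "c \<in> CW n" "n > 0"
  shows "cycle_form n (perm_of c) = c"
  using assms perm_of_pow[OF assms]
  by (intro nth_equalityI) (auto simp: cycle_form_def CW_def)

lemma perm_of_permutes:
  assumes "c \<in> CW n" "n > 0"
  shows "perm_of c permutes {1..n}"
proof (rule bij_imp_permutes)
  have d: "distinct c" and s: "set c = {1..n}" and l: "length c = n" using assms by (auto simp: CW_def)
  have sub: "set c \<subseteq> perm_of c ` set c"
  proof
    fix x assume "x \<in> set c"
    then obtain i where i: "i < n" "x = c ! i" using l by (auto simp: in_set_conv_nth)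
    let ?j = "(i + n - 1) mod n"
    have "?j < n" using assms by simp
    have "perm_of c (c ! ?j) = c ! (Suc ?j mod n)" using perm_of_nth[OF d, of ?j] l \<open>?j < n\<close> by simp
    also have "Suc ?j mod n = i" using i assms
      by (metis Suc_diff_1 add_Suc_right add_gr_0 mod_Suc_eq mod_add_self2 mod_less)
    finally have "perm_of c (c ! ?j) = x" using i by simp
    then show "x \<in> perm_of c ` set c" using \<open>?j < n\<close> l by (metis image_eqI nth_mem)
  qed
  have img: "perm_of c ` set c \<subseteq> set c"
  proof
    fix y assume "y \<in> perm_of c ` set c"
    then obtain i where i: "i < n" "y = perm_of c (c ! i)" using l by (auto simp: in_set_conv_nth)
    then show "y \<in> set c" using perm_of_nth[OF d, of i] l assms by simp
  qed
  have "inj_on (perm_of c) (set c)" using finite_surj_inj[OF _ sub] by simp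
  then show "bij_betw (perm_of c) {1..n} {1..n}" using sub img s by (auto simp: bij_betw_def)
  show "\<And>x. x \<notin> {1..n} \<Longrightarrow> perm_of c x = x" using s perm_of_out by auto
qed

lemma cyclic_perm_of:
  assumes "c \<in> CW n" "n > 0"
  shows "cyclic_perm n (perm_of c)"
proof -
  have "{(perm_of c ^^ k) 1 | k. True} = set c"
  proof
    show "{(perm_of c ^^ k) 1 | k. True} \<subseteq> set c"
      using perm_of_pow[OF assms] assms by (auto simp: CW_def)
    show "set c \<subseteq> {(perm_of c ^^ k) 1 | k. True}"
    proof
      fix x assume "x \<in> set c"
      then obtain i where "i < n" "x = c ! i" using assms by (auto simp: in_set_conv_nth CW_def)
      then have "x = (perm_of c ^^ i) 1" using perm_of_pow[OF assms, of i] by simp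
      then show "x \<in> {(perm_of c ^^ k) 1 | k. True}" by blast
    qed
  qed
  then show ?thesis using perm_of_permutes[OF assms] assms by (simp add: cyclic_perm_def CW_def)
qed


lemma cyc_orbit_facts:
  assumes cp: "cyclic_perm n \<pi>"
  shows "n > 0" "inj_on (\<lambda>i. (\<pi> ^^ i) 1) {..<n}" "(\<pi> ^^ n) 1 = 1"
proof -
  let ?f = "\<lambda>i. (\<pi> ^^ i) 1"
  have perm: "\<pi> permutes {1..n}" and orb: "{?f k | k. True} = {1..n}"
    using cp by (auto simp: cyclic_perm_def)
  have "?f 0 \<in> {1..n}" using orb by blast
  then show n0: "n > 0" by simp
  have injp: "inj (\<pi> ^^ i)" for i
    using perm by (simp add: inj_fn permutes_inj)
  have bk: "?f (j - i) = 1" if "i < j" "?f i = ?f j" for i j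
  proof -
    have "?f j = (\<pi> ^^ i) (?f (j - i))"
      using that by (metis funpow_add le_add_diff_inverse less_imp_le o_apply)
    then have "(\<pi> ^^ i) (?f (j - i)) = (\<pi> ^^ i) 1" using that by simp
    then show ?thesis using injp[of i] by (simp add: inj_def)
  qed
  have big: "d \<ge> n" if "d > 0" "?f d = 1" for d
  proof -
    have "{?f k | k. True} \<subseteq> ?f ` {..<d}"
    proof
      fix x assume "x \<in> {?f k | k. True}"
      then obtain k where "x = ?f k" by blast
      then have "x = ?f (k mod d)" using funpow_mod_eq[where f=\<pi> and n=d and x=1 and m=k] that by simp
      then show "x \<in> ?f ` {..<d}" using that by auto
    qed
    then have "card {1..n} \<le> card (?f ` {..<d})" using orb by (intro card_mono) auto
    also have "\<dots> \<le> d" using card_image_le[of "{..<d}" ?f] by simp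
    finally show ?thesis by simp
  qed
  show inj: "inj_on ?f {..<n}"
  proof (rule inj_onI)
    fix i j assume ij: "i \<in> {..<n}" "j \<in> {..<n}" "?f i = ?f j"
    show "i = j"
    proof (rule ccontr)
      assume "i \<noteq> j"
      then consider "i < j" | "j < i" by linarith
      then show False
      proof cases
        case 1 then show False using bk[OF 1 ij(3)] big[of "j - i"] ij by auto
      next
        case 2 then show False using bk[OF 2 ij(3)[symmetric]] big[of "i - j"] ij by auto
      qed
    qed
  qed
  have "?f n \<in> {1..n}" using orb by blast
  also have "{1..n} = ?f ` {..<n}"
  proof -
    have "?f ` {..<n} \<subseteq> {1..n}" using orb by blast
    moreover have "card (?f ` {..<n}) = n" using card_image[OF inj] by simp
    ultimately show ?thesis by (metis card_atLeastAtMost card_subset_eq diff_Suc_1 finite_atLeastAtMost)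
  qed
  finally obtain j where j: "j < n" "?f n = ?f j" by auto
  show "?f n = 1"
  proof (cases "j = 0")
    case True then show ?thesis using j by simp
  next
    case False
    then have "?f (n - j) = 1" using bk[of j n] j by simp
    then show ?thesis using big[of "n - j"] j False by simp
  qed
qed

lemma cycle_form_CW:
  assumes cp: "cyclic_perm n \<pi>"
  shows "cycle_form n \<pi> \<in> CW n" "perm_of (cycle_form n \<pi>) = \<pi>"
proof -
  let ?f = "\<lambda>i. (\<pi> ^^ i) 1"
  let ?c = "cycle_form n \<pi>"
  note F = cyc_orbit_facts[OF cp]
  have perm: "\<pi> permutes {1..n}" and orb: "{?f k | k. True} = {1..n}"
    using cp by (auto simp: cyclic_perm_def)
  have c: "?c = map ?f [0..<n]" by (simp add: cycle_form_def)
  have d: "distinct ?c" using F(2) by (simp add: c distinct_map lessThan_atLeast0)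
  have sub: "set ?c \<subseteq> {1..n}" using orb by (auto simp: c)
  have "card (set ?c) = n" using distinct_card[OF d] by (simp add: c)
  then have s: "set ?c = {1..n}" using sub by (metis card_atLeastAtMost card_subset_eq diff_Suc_1 finite_atLeastAtMost)
  show cw: "?c \<in> CW n" using d s F(1) by (simp add: CW_def c)
  show "perm_of ?c = \<pi>"
  proof
    fix x
    show "perm_of ?c x = \<pi> x"
    proof (cases "x \<in> set ?c")
      case False
      then show ?thesis using perm_of_out[OF False] s perm by (simp add: permutes_not_in)
    next
      case True
      then obtain i where i: "i < n" "x = ?c ! i" by (auto simp: in_set_conv_nth c)
      have "perm_of ?c x = ?c ! (Suc i mod n)" using perm_of_nth[OF d, of i] i by (simp add: c)
      also have "\<dots> = ?f (Suc i mod n)" using F(1) by (simp add: c)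
      also have "\<dots> = ?f (Suc i)" using funpow_mod_eq[where f=\<pi> and n=n and x=1 and m="Suc i"] F(3) by simp
      also have "\<dots> = \<pi> x" using i by (simp add: c)
      finally show ?thesis .
    qed
  qed
qed


definition occ4 :: "nat list \<Rightarrow> bool" where
  "occ4 xs \<longleftrightarrow> (\<exists>i j l m. i < j \<and> j < l \<and> l < m \<and> m < length xs \<and>
      xs ! i < xs ! m \<and> xs ! m < xs ! j \<and> xs ! j < xs ! l)"

lemma contains_1342: "contains_pattern xs [1,3,4,2] \<longleftrightarrow> occ4 xs"
proof
  assume a: "contains_pattern xs [1,3,4,2]"
  obtain idx where H: "length idx = length [1,3,4,2::nat] \<and> sorted_wrt (<) idx \<and> (\<forall>i\<in>set idx. i < length xs) \<and> (\<forall>i<length [1,3,4,2::nat]. \<forall>j<length [1,3,4,2::nat]. xs ! (idx ! i) < xs ! (idx ! j) \<longleftrightarrow> [1,3,4,2::nat] ! i < [1,3,4,2] ! j)"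
    using a unfolding contains_pattern_def by (elim exE) (rule that)
  have l: "length idx = 4" and s: "sorted_wrt (<) idx" and b: "\<forall>i\<in>set idx. i < length xs"
    using H by simp_all
  have c': "\<forall>a<Suc (Suc (Suc (Suc 0))). \<forall>b<Suc (Suc (Suc (Suc 0))). xs ! (idx ! a) < xs ! (idx ! b) \<longleftrightarrow> [1,3,4,2::nat] ! a < [1,3,4,2] ! b"
    using H[THEN conjunct2, THEN conjunct2, THEN conjunct2] by (simp add: numeral_eq_Suc)
  have "\<exists>i j k m. idx = [i,j,k,m]" using l by (simp add: numeral_eq_Suc length_Suc_conv) blast
  then obtain i j k m where idx: "idx = [i,j,k,m]" by blast
  have 1: "xs ! i < xs ! m" using c'[rule_format, of 0 3] by (simp add: idx)
  have 2: "xs ! m < xs ! j" using c'[rule_format, of 3 1] by (simp add: idx)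
  have 3: "xs ! j < xs ! k" using c'[rule_format, of 1 2] by (simp add: idx)
  show "occ4 xs" unfolding occ4_def using s b 1 2 3 unfolding idx
    by (intro exI[of _ i] exI[of _ j] exI[of _ k] exI[of _ m]) simp
next
  assume "occ4 xs"
  then obtain i j k m where o: "i < j" "j < k" "k < m" "m < length xs"
      "xs ! i < xs ! m" "xs ! m < xs ! j" "xs ! j < xs ! k"
    unfolding occ4_def by blast
  have "\<forall>a<Suc (Suc (Suc (Suc 0))). \<forall>b<Suc (Suc (Suc (Suc 0))). xs ! ([i,j,k,m] ! a) < xs ! ([i,j,k,m] ! b) \<longleftrightarrow> [1,3,4,2::nat] ! a < [1,3,4,2] ! b"
    using o by (simp add: All_less_Suc2)
  then show "contains_pattern xs [1,3,4,2]" unfolding contains_pattern_def using o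
    by (intro exI[of _ "[i,j,k,m]"]) (simp add: numeral_eq_Suc)
qed

definition cyc_ord :: "nat \<Rightarrow> nat \<Rightarrow> nat \<Rightarrow> nat \<Rightarrow> bool" where
  "cyc_ord a b c d \<longleftrightarrow> (a<b \<and> b<c \<and> c<d) \<or> (b<c \<and> c<d \<and> d<a) \<or> (c<d \<and> d<a \<and> a<b) \<or> (d<a \<and> a<b \<and> b<c)"

definition cyc_occ :: "nat list \<Rightarrow> bool" where
  "cyc_occ xs \<longleftrightarrow> (\<exists>a b c d. a < length xs \<and> b < length xs \<and> c < length xs \<and> d < length xs \<and>
      cyc_ord a b c d \<and> xs ! a < xs ! d \<and> xs ! d < xs ! b \<and> xs ! b < xs ! c)"

lemma rot_occ: 
  assumes "length xs = n" "n > 0"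
  shows "(\<exists>s<n. occ4 (rotate s xs)) \<longleftrightarrow> cyc_occ xs"
proof
  assume "\<exists>s<n. occ4 (rotate s xs)"
  then obtain s i j k m where s: "s < n" and o: "i < j" "j < k" "k < m" "m < n"
      "rotate s xs ! i < rotate s xs ! m" "rotate s xs ! m < rotate s xs ! j" "rotate s xs ! j < rotate s xs ! k"
    using assms by (auto simp: occ4_def)
  define P where "P t = (if s + t < n then s + t else s + t - n)" for t
  have r: "rotate s xs ! t = xs ! P t" if "t < n" for t
  proof -
    have "(s + t) mod n = P t" using s that by (simp add: P_def mod_if)
    then show ?thesis using nth_rotate[of t xs s] that assms by simp
  qed
  have "P i < n" "P j < n" "P k < n" "P m < n" using s o by (auto simp: P_def)
  moreover have "cyc_ord (P i) (P j) (P k) (P m)" using s o unfolding P_def cyc_ord_def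
    by (simp split: if_splits) linarith?
  moreover have "xs ! P i < xs ! P m" "xs ! P m < xs ! P j" "xs ! P j < xs ! P k"
    using o r[of i] r[of j] r[of k] r[of m] by simp_all
  ultimately show "cyc_occ xs" unfolding cyc_occ_def using assms
    by (intro exI[of _ "P i"] exI[of _ "P j"] exI[of _ "P k"] exI[of _ "P m"]) simp
next
  assume "cyc_occ xs"
  then obtain a b c d where abcd: "a < n" "b < n" "c < n" "d < n" "cyc_ord a b c d"
      "xs ! a < xs ! d" "xs ! d < xs ! b" "xs ! b < xs ! c"
    using assms by (auto simp: cyc_occ_def)
  define T where "T x = (if a \<le> x then x - a else x + n - a)" for x
  have r: "rotate a xs ! T x = xs ! x" if "x < n" for x
  proof -
    have "T x < n" using that abcd by (auto simp: T_def)
    moreover have "(a + T x) mod n = x" using that abcd by (auto simp: T_def)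
    ultimately show ?thesis using nth_rotate[of "T x" xs a] assms by simp
  qed
  have ord: "T a < T b" "T b < T c" "T c < T d" "T d < n"
    using abcd unfolding T_def cyc_ord_def by auto
  have "occ4 (rotate a xs)" unfolding occ4_def
    using ord abcd r by (intro exI[of _ "T a"] exI[of _ "T b"] exI[of _ "T c"] exI[of _ "T d"]) (simp add: assms)
  then show "\<exists>s<n. occ4 (rotate s xs)" using abcd by auto
qed

definition dec :: "nat list \<Rightarrow> nat list \<Rightarrow> bool" where
  "dec xs I \<longleftrightarrow> sorted_wrt (<) I \<and> (\<forall>i\<in>set I. i < length xs) \<and> sorted_wrt (\<lambda>i j. xs ! j < xs ! i) I"

definition hasdec :: "nat list \<Rightarrow> nat \<Rightarrow> bool" where
  "hasdec xs k \<longleftrightarrow> (\<exists>I. dec xs I \<and> length I = k)"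

lemma delta_nth: "i < k \<Longrightarrow> delta k ! i = k - i"
  unfolding delta_def by (subst rev_nth) (auto simp: nth_append)

lemma length_delta[simp]: "length (delta k) = k" by (simp add: delta_def)

lemma contains_delta: "contains_pattern xs (delta k) \<longleftrightarrow> hasdec xs k"
proof
  assume a: "contains_pattern xs (delta k)"
  obtain I where H: "length I = length (delta k) \<and> sorted_wrt (<) I \<and> (\<forall>i\<in>set I. i < length xs) \<and> (\<forall>i<length (delta k). \<forall>j<length (delta k). xs ! (I ! i) < xs ! (I ! j) \<longleftrightarrow> delta k ! i < delta k ! j)"
    using a unfolding contains_pattern_def by (elim exE) (rule that)
  have l: "length I = k" and s: "sorted_wrt (<) I" and b: "\<forall>i\<in>set I. i < length xs"
    and c: "\<forall>i<k. \<forall>j<k. xs ! (I ! i) < xs ! (I ! j) \<longleftrightarrow> delta k ! i < delta k ! j"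
    using H by simp_all
  have "sorted_wrt (\<lambda>i j. xs ! j < xs ! i) I"
    unfolding sorted_wrt_iff_nth_less
  proof (intro allI impI)
    fix i j assume "i < j" "j < length I"
    then show "xs ! (I ! j) < xs ! (I ! i)" using c l delta_nth[of i k] delta_nth[of j k] by auto
  qed
  then show "hasdec xs k" using l s b unfolding hasdec_def dec_def by blast
next
  assume "hasdec xs k"
  then obtain I where l: "length I = k" and s: "sorted_wrt (<) I" and b: "\<forall>i\<in>set I. i < length xs"
    and d: "sorted_wrt (\<lambda>i j. xs ! j < xs ! i) I"
    unfolding hasdec_def dec_def by blast
  have c: "\<forall>i<k. \<forall>j<k. xs ! (I ! i) < xs ! (I ! j) \<longleftrightarrow> delta k ! i < delta k ! j"
  proof (intro allI impI)
    fix i j assume ij: "i < k" "j < k"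
    consider "i < j" | "i = j" | "j < i" by linarith
    then show "xs ! (I ! i) < xs ! (I ! j) \<longleftrightarrow> delta k ! i < delta k ! j"
    proof cases
      case 1 then show ?thesis using d[unfolded sorted_wrt_iff_nth_less, rule_format, of i j] ij l delta_nth[of i k] delta_nth[of j k]
        by auto
    next
      case 2 then show ?thesis by simp
    next
      case 3 then show ?thesis using d[unfolded sorted_wrt_iff_nth_less, rule_format, of j i] ij l delta_nth[of i k] delta_nth[of j k]
        by auto
    qed
  qed
  show "contains_pattern xs (delta k)" unfolding contains_pattern_def
    by (rule exI[of _ I]) (simp add: l s b c)
qed


definition Good :: "nat \<Rightarrow> nat \<Rightarrow> nat list set" where
  "Good m j = {c \<in> CW m. \<not> hasdec (one_line m (perm_of c)) j \<and> \<not> cyc_occ c}"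

lemma rot_cond:
  assumes "c \<in> CW m" "m > 0"
  shows "(\<forall>w\<in>cyclic_rotations m (perm_of c). avoids w [1,3,4,2]) \<longleftrightarrow> \<not> cyc_occ c"
proof -
  have e: "cyclic_rotations m (perm_of c) = {rotate i c | i. i < m}"
    using cycle_form_perm_of[OF assms] by (simp add: cyclic_rotations_def)
  have "(\<forall>w\<in>cyclic_rotations m (perm_of c). avoids w [1,3,4,2]) \<longleftrightarrow> (\<forall>i<m. avoids (rotate i c) [1,3,4,2])"
    unfolding e by blast
  also have "\<dots> \<longleftrightarrow> \<not> (\<exists>s<m. occ4 (rotate s c))"
    by (simp only: avoids_def contains_1342) blast
  also have "\<dots> \<longleftrightarrow> \<not> cyc_occ c" using rot_occ[of c m] assms by (simp add: CW_def)
  finally show ?thesis .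
qed

lemma avoiders_eq:
  assumes "m > 0"
  shows "cyc_avoiders m j = perm_of ` Good m j"
proof
  show "cyc_avoiders m j \<subseteq> perm_of ` Good m j"
  proof
    fix \<pi> assume "\<pi> \<in> cyc_avoiders m j"
    then have cp: "cyclic_perm m \<pi>" and av: "avoids (one_line m \<pi>) (delta j)"
      and rt: "\<forall>w\<in>cyclic_rotations m \<pi>. avoids w [1,3,4,2]"
      by (auto simp: cyc_avoiders_def)
    let ?c = "cycle_form m \<pi>"
    note cw = cycle_form_CW[OF cp]
    have "?c \<in> Good m j"
      using cw av rt rot_cond[OF cw(1) assms] by (simp add: Good_def avoids_def contains_delta)
    then show "\<pi> \<in> perm_of ` Good m j" using cw(2) by (metis image_eqI)
  qed
  show "perm_of ` Good m j \<subseteq> cyc_avoiders m j"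
  proof
    fix \<pi> assume "\<pi> \<in> perm_of ` Good m j"
    then obtain c where c: "c \<in> Good m j" "\<pi> = perm_of c" by blast
    then have cw: "c \<in> CW m" by (simp add: Good_def)
    show "\<pi> \<in> cyc_avoiders m j"
      using c cyclic_perm_of[OF cw assms] rot_cond[OF cw assms]
      by (simp add: Good_def cyc_avoiders_def avoids_def contains_delta)
  qed
qed

lemma inj_perm_of: assumes "m > 0" shows "inj_on perm_of (Good m j)"
proof (rule inj_onI)
  fix c d assume "c \<in> Good m j" "d \<in> Good m j" "perm_of c = perm_of d"
  then have "c \<in> CW m" "d \<in> CW m" by (simp_all add: Good_def)
  then have "cycle_form m (perm_of c) = c" "cycle_form m (perm_of d) = d"
    using assms cycle_form_perm_of by blast+
  then show "c = d" using \<open>perm_of c = perm_of d\<close> by metis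
qed

lemma a_eq: assumes "m > 0" shows "a_circ_1342 m j = card (Good m j)"
proof -
  have "card (perm_of ` Good m j) = card (Good m j)" by (rule card_image[OF inj_perm_of[OF assms]])
  then show ?thesis by (simp only: a_circ_1342_def avoiders_eq[OF assms])
qed

lemma image_filter_eq: "{x \<in> f ` A. P x} = f ` {a \<in> A. P (f a)}" by blast

lemma perm_of_1: assumes "c \<in> CW m" "m > 1" shows "perm_of c 1 = c ! 1"
proof -
  have "perm_of c 1 = (perm_of c ^^ 1) 1" by simp
  also have "\<dots> = c ! (1 mod m)" using perm_of_pow[OF assms(1), of 1] assms by simp
  finally show ?thesis using assms by simp
qed

lemma b_eq:
  assumes "m > 1"
  shows "b_circ_1342 m j = card {c \<in> Good m j. c ! 1 = m}"
proof -
  have "{c \<in> Good m j. perm_of c 1 = m} = {c \<in> Good m j. c ! 1 = m}"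
  proof -
    have h: "\<forall>c\<in>Good m j. perm_of c 1 = c ! 1" using perm_of_1[OF _ assms] unfolding Good_def by blast
    show ?thesis using h by (intro Collect_cong) auto
  qed
  then have e: "{\<pi> \<in> cyc_avoiders m j. \<pi> 1 = m} = perm_of ` {c \<in> Good m j. c ! 1 = m}"
    using avoiders_eq[of m j] assms image_filter_eq[of perm_of "Good m j" "\<lambda>\<pi>. \<pi> 1 = m"] by simp
  have "inj_on perm_of {c \<in> Good m j. c ! 1 = m}"
    using assms by (intro inj_on_subset[OF inj_perm_of[of m j]]) auto
  then show ?thesis unfolding b_circ_1342_def e by (rule card_image)
qed


lemma dec_map_mono:
  assumes "strict_mono (h :: nat \<Rightarrow> nat)"
  shows "dec (map h xs) I \<longleftrightarrow> dec xs I"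
proof -
  have eq: "\<forall>i\<in>set I. \<forall>j\<in>set I. (map h xs ! j < map h xs ! i) = (xs ! j < xs ! i)" 
    if b: "\<forall>i\<in>set I. i < length xs"
    using b assms by (simp add: strict_mono_less)
  have "sorted_wrt (\<lambda>i j. map h xs ! j < map h xs ! i) I = sorted_wrt (\<lambda>i j. xs ! j < xs ! i) I"
    if b: "\<forall>i\<in>set I. i < length xs"
  proof
    assume "sorted_wrt (\<lambda>i j. map h xs ! j < map h xs ! i) I"
    then show "sorted_wrt (\<lambda>i j. xs ! j < xs ! i) I"
      by (rule sorted_wrt_mono_rel[rotated]) (use eq[OF b] in blast)
  next
    assume "sorted_wrt (\<lambda>i j. xs ! j < xs ! i) I"
    then show "sorted_wrt (\<lambda>i j. map h xs ! j < map h xs ! i) I"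
      by (rule sorted_wrt_mono_rel[rotated]) (use eq[OF b] in blast)
  qed
  then show ?thesis unfolding dec_def by auto
qed
lemma hasdec_map_mono:
  assumes "strict_mono (h :: nat \<Rightarrow> nat)"
  shows "hasdec (map h xs) k \<longleftrightarrow> hasdec xs k"
  using dec_map_mono[OF assms] by (simp add: hasdec_def)

lemma hasdec_two_cons:
  assumes k: "k \<ge> 3" and pos: "\<forall>y\<in>set ys. y > 0"
  shows "hasdec (2 # ys) k \<longleftrightarrow> hasdec ys k"
proof
  assume "hasdec ys k"
  then obtain I where d: "dec ys I" and l: "length I = k" by (auto simp: hasdec_def)
  have "dec (2 # ys) (map Suc I)"
    using d unfolding dec_def by (auto simp: sorted_wrt_map)
  then show "hasdec (2 # ys) k" using l unfolding hasdec_def by (intro exI[of _ "map Suc I"]) simp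
next
  assume "hasdec (2 # ys) k"
  then obtain I where d: "dec (2 # ys) I" and l: "length I = k" by (auto simp: hasdec_def)
  have s: "sorted_wrt (<) I" and b: "\<forall>i\<in>set I. i < Suc (length ys)"
    and v: "sorted_wrt (\<lambda>i j. (2 # ys) ! j < (2 # ys) ! i) I" using d by (auto simp: dec_def)
  show "hasdec ys k"
  proof (cases "0 \<in> set I")
    case False
    let ?J = "map (\<lambda>i. i - 1) I"
    have pos': "\<forall>i\<in>set I. i > 0"
    proof
      fix i assume "i \<in> set I" with False show "i > 0" by (cases i) auto
    qed
    have R: "ys ! (y - 1) < ys ! (x - 1)"
      if a: "x \<in> set I" "y \<in> set I" "(2 # ys) ! y < (2 # ys) ! x" for x y
    proof -
      have "x > 0" "y > 0" using pos' a by auto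
      then show ?thesis using a(3) by (simp add: nth_Cons')
    qed
    have "sorted_wrt (<) ?J" unfolding sorted_wrt_map
      using s by (rule sorted_wrt_mono_rel[rotated]) (use pos' in auto)
    moreover have "\<forall>i\<in>set ?J. i < length ys" using b pos' by auto
    moreover have "sorted_wrt (\<lambda>i j. ys ! j < ys ! i) ?J" unfolding sorted_wrt_map
      using v by (rule sorted_wrt_mono_rel[rotated]) (rule R)
    ultimately show ?thesis using l unfolding hasdec_def dec_def by (intro exI[of _ ?J]) simp
  next
    case True
    obtain i0 i1 i2 rest where I: "I = i0 # i1 # i2 # rest"
      using l k by (auto simp: Suc_le_length_iff numeral_3_eq_3)
    have "i0 = 0"
    proof (rule ccontr)
      assume "i0 \<noteq> 0"
      then have "0 \<in> set (i1 # i2 # rest)" using True I by auto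
      then have "i0 < 0" using s I by auto
      then show False by simp
    qed
    then have "0 < i1" "i1 < i2" using s I by auto
    then have "ys ! (i1 - 1) < 2" "ys ! (i2 - 1) < ys ! (i1 - 1)"
      using v I \<open>i0 = 0\<close> by (auto simp: nth_Cons')
    moreover have "i2 - 1 < length ys" using b I \<open>0 < i1\<close> \<open>i1 < i2\<close> by auto
    then have "ys ! (i2 - 1) > 0" using pos by auto
    ultimately show ?thesis by linarith
  qed
qed



lemma CW_shift:
  assumes "d \<in> CW m"
  shows "1 # map Suc d \<in> CW (Suc m)"
proof -
  have d: "distinct d" "set d = {1..m}" "length d = m" using assms by (auto simp: CW_def)
  have "1 \<notin> set (map Suc d)" using d by auto
  moreover have "distinct (map Suc d)" using d by (simp add: distinct_map)
  moreover have "insert 1 (Suc ` {1..m}) = {1..Suc m}"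
    by (auto simp: image_iff)
  ultimately show ?thesis using d by (simp add: CW_def)
qed

lemma CW_unshift:
  assumes c: "c \<in> CW (Suc m)" and c1: "c ! 1 = 2" and m: "m \<ge> 1"
  shows "map (\<lambda>x. x - 1) (tl c) \<in> CW m" "c = 1 # map Suc (map (\<lambda>x. x - 1) (tl c))"
proof -
  have cd: "distinct c" "set c = {1..Suc m}" "length c = Suc m" "c ! 0 = 1" using c by (auto simp: CW_def)
  obtain t where ct: "c = 1 # t" using cd by (cases c) auto
  have e1: "set c = insert 1 (set t)" using ct by simp
  have e2: "1 \<notin> set t" using cd ct by simp
  have "set t = set c - {1}" using e1 e2 by blast
  also have "\<dots> = {1..Suc m} - {1}" using cd by simp
  also have "\<dots> = {2..Suc m}" by auto
  finally have st: "set t = {2..Suc m}" .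
  have t: "distinct t" "set t = {2..Suc m}" "length t = m"
    using cd ct st by auto
  have t2: "\<forall>x\<in>set t. x \<ge> 2" using t by auto
  have mt: "map Suc (map (\<lambda>x. x - 1) t) = t"
    using t2 by (induction t) auto
  then show "c = 1 # map Suc (map (\<lambda>x. x - 1) (tl c))" using ct by simp
  have "inj_on (\<lambda>x. x - 1) (set t)" using t2 by (auto simp: inj_on_def)
  then have "distinct (map (\<lambda>x. x - 1) t)" using t by (simp add: distinct_map)
  moreover have "(\<lambda>x. x - 1) ` {2..Suc m} = {1..m}"
  proof
    show "(\<lambda>x. x - 1) ` {2..Suc m} \<subseteq> {1..m}" by auto
    show "{1..m} \<subseteq> (\<lambda>x. x - 1) ` {2..Suc m}"
    proof
      fix y assume "y \<in> {1..m}"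
      then have "Suc y \<in> {2..Suc m}" "y = Suc y - 1" by auto
      then show "y \<in> (\<lambda>x. x - 1) ` {2..Suc m}" by blast
    qed
  qed
  moreover have "t ! 0 = 2" using c1 ct by simp
  ultimately show "map (\<lambda>x. x - 1) (tl c) \<in> CW m" using t m ct by (simp add: CW_def)
qed

lemma cyc_occ_map_Suc: "cyc_occ (map Suc d) \<longleftrightarrow> cyc_occ d"
proof
  assume "cyc_occ (map Suc d)"
  then obtain a b c e where o: "a < length d" "b < length d" "c < length d" "e < length d"
    "cyc_ord a b c e" "map Suc d ! a < map Suc d ! e" "map Suc d ! e < map Suc d ! b" "map Suc d ! b < map Suc d ! c"
    unfolding cyc_occ_def by auto
  then show "cyc_occ d" unfolding cyc_occ_def
    by (intro exI[of _ a] exI[of _ b] exI[of _ c] exI[of _ e]) simp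
next
  assume "cyc_occ d"
  then obtain a b c e where o: "a < length d" "b < length d" "c < length d" "e < length d"
    "cyc_ord a b c e" "d ! a < d ! e" "d ! e < d ! b" "d ! b < d ! c"
    unfolding cyc_occ_def by auto
  then show "cyc_occ (map Suc d)" unfolding cyc_occ_def
    by (intro exI[of _ a] exI[of _ b] exI[of _ c] exI[of _ e]) simp
qed

lemma cyc_ord_shift: "cyc_ord (Suc a) (Suc b) (Suc c) (Suc d) \<longleftrightarrow> cyc_ord a b c d"
  unfolding cyc_ord_def by auto

lemma cyc_occ_cons_min:
  assumes mn: "\<forall>i<length ys. x < ys ! i" and m0: "\<forall>i<length ys. 0 < i \<longrightarrow> ys ! 0 < ys ! i"
  shows "cyc_occ (x # ys) \<longleftrightarrow> cyc_occ ys"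
proof
  assume "cyc_occ ys"
  then obtain a b c d where o: "a < length ys" "b < length ys" "c < length ys" "d < length ys"
    "cyc_ord a b c d" "ys ! a < ys ! d" "ys ! d < ys ! b" "ys ! b < ys ! c"
    unfolding cyc_occ_def by blast
  show "cyc_occ (x # ys)" unfolding cyc_occ_def
    using o cyc_ord_shift[of a b c d]
    by (intro exI[of _ "Suc a"] exI[of _ "Suc b"] exI[of _ "Suc c"] exI[of _ "Suc d"]) simp
next
  assume "cyc_occ (x # ys)"
  then obtain a b c d where o: "a < Suc (length ys)" "b < Suc (length ys)" "c < Suc (length ys)" "d < Suc (length ys)"
    "cyc_ord a b c d" "(x # ys) ! a < (x # ys) ! d" "(x # ys) ! d < (x # ys) ! b" "(x # ys) ! b < (x # ys) ! c"
    unfolding cyc_occ_def by auto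
  have v: "(x # ys) ! i > x" if "0 < i" "i < Suc (length ys)" for i
    using mn that by (cases i) auto
  have nb: "b \<noteq> 0" "c \<noteq> 0" "d \<noteq> 0"
    using o v by (metis less_asym not_gr0 nth_Cons_0)+
  show "cyc_occ ys"
  proof (cases "a = 0")
    case False
    obtain a' b' c' d' where s: "a = Suc a'" "b = Suc b'" "c = Suc c'" "d = Suc d'"
      using False nb by (metis not0_implies_Suc)
    show ?thesis unfolding cyc_occ_def using o s cyc_ord_shift[of a' b' c' d']
      by (intro exI[of _ a'] exI[of _ b'] exI[of _ c'] exI[of _ d']) simp
  next
    case True
    obtain b' c' d' where s: "b = Suc b'" "c = Suc c'" "d = Suc d'"
      using nb by (metis not0_implies_Suc)
    have ord: "b' < c'" "c' < d'" using o(5) True s unfolding cyc_ord_def by auto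
    have "ys ! d' < ys ! b'" "ys ! b' < ys ! c'" using o s by auto
    have "b' \<noteq> 0"
    proof
      assume "b' = 0"
      then have "ys ! 0 < ys ! d'" using m0 ord o s by simp
      then show False using \<open>ys ! d' < ys ! b'\<close> \<open>b' = 0\<close> by simp
    qed
    then have "ys ! 0 < ys ! d'" using m0 ord o s by simp
    moreover have "cyc_ord 0 b' c' d'" using ord \<open>b' \<noteq> 0\<close> unfolding cyc_ord_def by simp
    moreover have "0 < length ys" using o(4) s(3) by (cases ys) auto
    ultimately show ?thesis unfolding cyc_occ_def using o s True \<open>ys ! d' < ys ! b'\<close> \<open>ys ! b' < ys ! c'\<close>
      by (intro exI[of _ 0] exI[of _ b'] exI[of _ c'] exI[of _ d']) simp
  qed
qed



definition hsh :: "nat \<Rightarrow> nat" where "hsh y = (if y \<le> 1 then y else Suc y)"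

lemma hsh_mono: "strict_mono hsh"
  by (rule strict_monoI) (auto simp: hsh_def)

lemma one_line_shift:
  assumes d: "d \<in> CW m" and m: "m \<ge> 1"
  shows "one_line (Suc m) (perm_of (1 # map Suc d)) = 2 # map hsh (one_line m (perm_of d))"
proof -
  let ?c = "1 # map Suc d"
  have dd: "distinct d" "set d = {1..m}" "length d = m" "d ! 0 = 1" using d by (auto simp: CW_def)
  have cw: "?c \<in> CW (Suc m)" using CW_shift[OF d] .
  have cd: "distinct ?c" "length ?c = Suc m" using cw by (auto simp: CW_def)
  have p1: "perm_of ?c 1 = 2"
  proof -
    have "perm_of ?c (?c ! 0) = ?c ! (Suc 0 mod length ?c)" by (rule perm_of_nth[OF cd(1)]) simp
    then show ?thesis using m dd by simp
  qed
  have ps: "perm_of ?c (Suc y) = hsh (perm_of d y)" if y: "y \<in> {1..m}" for y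
  proof -
    obtain j where j: "j < m" "y = d ! j" using y dd by (metis in_set_conv_nth)
    have "perm_of ?c (?c ! Suc j) = ?c ! (Suc (Suc j) mod length ?c)"
      by (rule perm_of_nth[OF cd(1)]) (use j cd in simp)
    then have e1: "perm_of ?c (Suc y) = ?c ! (Suc (Suc j) mod Suc m)" using j cd by simp
    have e2: "perm_of d y = d ! (Suc j mod m)" using perm_of_nth[OF dd(1), of j] j dd by simp
    show ?thesis
    proof (cases "Suc j < m")
      case True
      have "d ! Suc j \<noteq> 1" using dd True by (metis nat.distinct(1) nth_eq_iff_index_eq zero_less_Suc order.strict_trans)
      moreover have "d ! Suc j \<in> {1..m}" using dd True by (metis nth_mem)
      ultimately have "hsh (d ! Suc j) = Suc (d ! Suc j)" by (simp add: hsh_def)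
      then show ?thesis using e1 e2 True dd by simp
    next
      case False
      then have "Suc j = m" using j by simp
      then show ?thesis using e1 e2 dd by (simp add: hsh_def)
    qed
  qed
  have u: "[1..<Suc m + 1] = 1 # map Suc [1..<m + 1]"
    by (simp add: upt_conv_Cons map_Suc_upt del: upt_Suc)
  have "map (perm_of ?c) (map Suc [1..<m + 1]) = map hsh (map (perm_of d) [1..<m + 1])"
    unfolding map_map by (rule map_cong[OF refl]) (use ps in auto)
  then show ?thesis unfolding one_line_def u using p1 by simp
qed

lemma G2_card:
  assumes n: "n \<ge> 3" and k: "k \<ge> 3"
  shows "card {c \<in> Good n k. c ! 1 = 2} = card (Good (n - 1) k)"
proof -
  define m where "m = n - 1"
  have m: "m \<ge> 2" "n = Suc m" using n by (auto simp: m_def)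
  let ?f = "\<lambda>d. 1 # map Suc d"
  have inj: "inj_on ?f (Good m k)" by (rule inj_onI) simp
  have key: "?f d \<in> Good n k \<longleftrightarrow> d \<in> Good m k" if d: "d \<in> CW m" for d
  proof -
    have dd: "distinct d" "set d = {1..m}" "length d = m" "d ! 0 = 1" using d by (auto simp: CW_def)
    have cw: "?f d \<in> CW n" using CW_shift[OF d] m by simp
    have ol: "one_line n (perm_of (?f d)) = 2 # map hsh (one_line m (perm_of d))"
      using one_line_shift[OF d] m by simp
    have pos: "\<forall>y\<in>set (map hsh (one_line m (perm_of d))). y > 0"
    proof
      fix y assume "y \<in> set (map hsh (one_line m (perm_of d)))"
      then obtain x where x0: "x \<in> set [1..<m+1]" "y = hsh (perm_of d x)"
        unfolding one_line_def by auto
      then have x: "x \<in> {1..m}" "y = hsh (perm_of d x)" by auto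
      have pp: "perm_of d permutes {1..m}" using perm_of_permutes[OF d] m by simp
      have "perm_of d x \<in> {1..m}" using permutes_in_image[OF pp] x(1) by blast
      then show "y > 0" using x by (simp add: hsh_def)
    qed
    have hd: "hasdec (one_line n (perm_of (?f d))) k \<longleftrightarrow> hasdec (one_line m (perm_of d)) k"
      unfolding ol using hasdec_two_cons[OF k pos] hasdec_map_mono[OF hsh_mono] by simp
    have mn: "\<forall>i<length (map Suc d). 1 < map Suc d ! i"
    proof (intro allI impI)
      fix i assume "i < length (map Suc d)"
      then have "d ! i \<in> {1..m}" using dd by (metis length_map nth_mem)
      then show "1 < map Suc d ! i" using \<open>i < length (map Suc d)\<close> by simp
    qed
    have m0: "\<forall>i<length (map Suc d). 0 < i \<longrightarrow> map Suc d ! 0 < map Suc d ! i"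
    proof (intro allI impI)
      fix i assume i: "i < length (map Suc d)" "0 < i"
      then have "d ! i \<noteq> 1" using nth_eq_iff_index_eq[OF dd(1), of i 0] dd by auto
      moreover have "d ! i \<in> {1..m}" using dd i by (metis length_map nth_mem)
      ultimately show "map Suc d ! 0 < map Suc d ! i" using i dd by simp
    qed
    have co: "cyc_occ (?f d) \<longleftrightarrow> cyc_occ d"
      using cyc_occ_cons_min[OF mn m0] cyc_occ_map_Suc by simp
    show ?thesis using cw d hd co by (simp add: Good_def)
  qed
  have "?f ` Good m k = {c \<in> Good n k. c ! 1 = 2}"
  proof
    show "?f ` Good m k \<subseteq> {c \<in> Good n k. c ! 1 = 2}"
    proof
      fix c assume "c \<in> ?f ` Good m k"
      then obtain d where d: "d \<in> Good m k" "c = ?f d" by blast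
      then have dc: "d \<in> CW m" by (simp add: Good_def)
      then have "d ! 0 = 1" "length d = m" by (auto simp: CW_def)
      then show "c \<in> {c \<in> Good n k. c ! 1 = 2}" using key[OF dc] d m by simp
    qed
    show "{c \<in> Good n k. c ! 1 = 2} \<subseteq> ?f ` Good m k"
    proof
      fix c assume c: "c \<in> {c \<in> Good n k. c ! 1 = 2}"
      then have cw: "c \<in> CW (Suc m)" "c ! 1 = 2" using m by (auto simp: Good_def)
      have "map (\<lambda>x. x - 1) (tl c) \<in> CW m" "c = ?f (map (\<lambda>x. x - 1) (tl c))"
        using CW_unshift[OF cw] m by auto
      moreover have "c \<in> Good n k" using c by simp
      ultimately have "map (\<lambda>x. x - 1) (tl c) \<in> Good m k" using key by metis
      then show "c \<in> ?f ` Good m k" using \<open>c = ?f _\<close> by blast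
    qed
  qed
  then show ?thesis using card_image[OF inj] m_def by simp
qed



lemma cyc_occ_take:
  assumes "cyc_occ (take r c)" shows "cyc_occ c"
proof -
  obtain a b x d where o: "a < length (take r c)" "b < length (take r c)" "x < length (take r c)" "d < length (take r c)"
    "cyc_ord a b x d" "take r c ! a < take r c ! d" "take r c ! d < take r c ! b" "take r c ! b < take r c ! x"
    using assms unfolding cyc_occ_def by blast
  then show ?thesis unfolding cyc_occ_def
    by (intro exI[of _ a] exI[of _ b] exI[of _ x] exI[of _ d]) simp
qed

lemma CW_vals:
  assumes "c \<in> CW n" "i < n"
  shows "c ! i \<in> {1..n}"
  using assms nth_mem[of i c] by (auto simp: CW_def)

lemma CW_inj:
  assumes "c \<in> CW n" "i < n" "j < n"
  shows "c ! i = c ! j \<longleftrightarrow> i = j"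
  using assms nth_eq_iff_index_eq[of c i j] by (auto simp: CW_def)

lemma struct_r:
  assumes c: "c \<in> CW n" and c1: "c ! 1 = r" and r: "3 \<le> r" "r < n" and nc: "\<not> cyc_occ c"
  shows "drop r c = rev [r+1..<n+1]" "take r c \<in> CW r"
proof -
  have cd: "distinct c" "set c = {1..n}" "length c = n" "c ! 0 = 1" using c by (auto simp: CW_def)
  have vals: "c ! i \<in> {1..n}" if "i < n" for i using CW_vals[OF c that] .
  have inj: "c ! i = c ! j \<longleftrightarrow> i = j" if "i < n" "j < n" for i j using CW_inj[OF c that] .
  have S: "\<not> (c ! j < r \<and> r < c ! i)" if "1 < i" "i < j" "j < n" for i j
  proof
    assume h: "c ! j < r \<and> r < c ! i"
    have "c ! j \<noteq> 1" using inj[of j 0] cd that by auto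
    then have "c ! 0 < c ! j" using vals[of j] cd that by auto
    moreover have "cyc_ord 0 1 i j" using that by (simp add: cyc_ord_def)
    ultimately have "cyc_occ c" unfolding cyc_occ_def using h that c1 cd
      by (intro exI[of _ 0] exI[of _ 1] exI[of _ i] exI[of _ j]) simp
    then show False using nc by simp
  qed
  have "2 \<in> set c" using cd r by auto
  then obtain y where y: "y < n" "c ! y = 2" using cd(3) by (metis in_set_conv_nth)
  have y1: "y \<noteq> 0" "y \<noteq> 1"
  proof
    assume "y = 0" then have "c ! y = 1" using cd by simp
    with y show False by simp
  next
    show "y \<noteq> 1"
    proof
      assume "y = 1" then have "c ! y = r" using c1 by simp
      with y r show False by simp
    qed
  qed
  have Dd: "c ! j < c ! i" if "1 < i" "i < j" "j < n" "r < c ! i" "r < c ! j" for i j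
  proof (rule ccontr)
    assume "\<not> c ! j < c ! i"
    moreover have "c ! j \<noteq> c ! i" using inj[of i j] that by auto
    ultimately have ij: "c ! i < c ! j" by simp
    have "y < i"
    proof (rule ccontr)
      assume "\<not> y < i"
      moreover have "y \<noteq> i" using y that r by auto
      ultimately have "i < y" by simp
      then show False using S[of i y] y that r by simp
    qed
    then have "cyc_ord y i j 1" using y1 that unfolding cyc_ord_def by simp
    then have "cyc_occ c" unfolding cyc_occ_def using y that ij c1 r cd
      by (intro exI[of _ y] exI[of _ i] exI[of _ j] exI[of _ 1]) simp
    then show False using nc by simp
  qed
  have big: "r < c ! i" if "r \<le> i" "i < n" for i
  proof (rule ccontr)
    assume "\<not> r < c ! i"
    moreover have "c ! i \<noteq> r" using inj[of i 1] that r c1 by auto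
    ultimately have small: "c ! i < r" by simp
    let ?A = "{j. j < n \<and> r < c ! j}"
    have "?A \<subseteq> {Suc i..<n}"
    proof
      fix j assume j: "j \<in> ?A"
      have jr: "r < c ! j" using j by simp
      have "j \<noteq> 0"
      proof assume "j = 0" with jr cd r show False by simp qed
      moreover have "j \<noteq> 1"
      proof assume "j = 1" with jr c1 show False by simp qed
      moreover have "j \<noteq> i" using j small by auto
      moreover have "\<not> (1 < j \<and> j < i)" using S[of j i] j small that by auto
      ultimately show "j \<in> {Suc i..<n}" using j by auto
    qed
    then have "card ?A \<le> n - Suc i" by (metis card_atLeastLessThan card_mono finite_atLeastLessThan)
    moreover have "card ?A = n - r"
    proof -
      have "inj_on (\<lambda>j. c ! j) ?A" using inj by (auto simp: inj_on_def)
      moreover have "(\<lambda>j. c ! j) ` ?A = {Suc r..n}"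
      proof
        show "(\<lambda>j. c ! j) ` ?A \<subseteq> {Suc r..n}" using vals by auto
        show "{Suc r..n} \<subseteq> (\<lambda>j. c ! j) ` ?A"
        proof
          fix v assume v: "v \<in> {Suc r..n}"
          then have "v \<in> set c" using cd by auto
          then obtain j where "j < n" "c ! j = v" using cd(3) by (metis in_set_conv_nth)
          then show "v \<in> (\<lambda>j. c ! j) ` ?A" using v by force
        qed
      qed
      ultimately show ?thesis by (metis card_atLeastAtMost card_image diff_Suc_Suc)
    qed
    ultimately show False using that r by linarith
  qed
  let ?L = "drop r c"
  have lL: "length ?L = n - r" using cd by simp
  have dL: "distinct ?L" using cd by simp
  have sL: "set ?L \<subseteq> {Suc r..n}"
  proof
    fix v assume "v \<in> set ?L"
    then obtain t where "t < n - r" "?L ! t = v" using lL by (metis in_set_conv_nth)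
    moreover have "?L ! t = c ! (r + t)" using cd r by simp
    moreover have rt: "r + t < n" using \<open>t < n - r\<close> by simp
    ultimately show "v \<in> {Suc r..n}" using big[OF _ rt] vals[OF rt] by auto
  qed
  have setL: "set ?L = {Suc r..n}"
  proof (rule card_subset_eq)
    show "finite {Suc r..n}" by simp
    show "set ?L \<subseteq> {Suc r..n}" by (rule sL)
    show "card (set ?L) = card {Suc r..n}" using distinct_card[OF dL] lL by simp
  qed
  have srt: "sorted_wrt (>) ?L"
    unfolding sorted_wrt_iff_nth_less
  proof (intro allI impI)
    fix i j assume ij: "i < j" "j < length ?L"
    have e: "?L ! i = c ! (r + i)" "?L ! j = c ! (r + j)" using cd ij lL r by simp_all
    have rj: "r + j < n" "r + i < n" using ij lL by simp_all
    have "c ! (r + j) < c ! (r + i)"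
      by (rule Dd) (use r ij rj big[of "r + i"] big[of "r + j"] in auto)
    then show "?L ! j < ?L ! i" using e by simp
  qed
  have "rev ?L = [Suc r..<Suc n]"
  proof (rule sorted_distinct_set_unique)
    have "sorted_wrt (\<lambda>x y. y \<le> x) ?L" using srt by (rule sorted_wrt_mono_rel[rotated]) auto
    then show "sorted (rev ?L)" by (simp add: sorted_wrt_rev)
    show "distinct (rev ?L)" using dL by simp
    show "sorted [Suc r..<Suc n]" by (rule sorted_upt)
    show "distinct [Suc r..<Suc n]" by (rule distinct_upt)
    show "set (rev ?L) = set [Suc r..<Suc n]" using setL by (simp only: set_rev set_upt atLeastLessThanSuc_atLeastAtMost)
  qed
  then have "?L = rev [Suc r..<Suc n]" by (metis rev_rev_ident)
  then show "drop r c = rev [r+1..<n+1]" by simp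
  have "set (take r c) = {1..r}"
  proof -
    have "set c = set (take r c) \<union> set ?L" using set_append[of "take r c" "drop r c"] by simp
    moreover have "set (take r c) \<inter> set ?L = {}" using distinct_append[of "take r c" "drop r c"] cd(1) by simp
    ultimately have "set (take r c) = {1..n} - {Suc r..n}" using cd setL by auto
    also have "\<dots> = {1..r}" using r by auto
    finally show ?thesis .
  qed
  then show "take r c \<in> CW r" using cd r by (simp add: CW_def)
qed




lemma app_CW:
  assumes s: "s \<in> CW r" and rn: "r < n" and r1: "1 \<le> r"
  shows "s @ rev [r+1..<n+1] \<in> CW n"
proof -
  have sd: "distinct s" "set s = {1..r}" "length s = r" "s ! 0 = 1" using s by (auto simp: CW_def)
  have "set (rev [r+1..<n+1]) = {r+1..n}" by auto
  moreover have "{1..r} \<union> {r+1..n} = {1..n}" using rn by auto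
  moreover have z: "s ! 0 = (s @ rev [r+1..<n+1]) ! 0" using sd rn r1 by (simp add: nth_append)
  ultimately have st: "set (s @ rev [r+1..<n+1]) = {1..n}" using sd by (simp only: set_append) 
  have "set s \<inter> set (rev [r+1..<n+1]) = {}" using sd by auto
  then have "distinct (s @ rev [r+1..<n+1])" using sd by (simp only: distinct_append distinct_rev distinct_upt)
  moreover have "length (s @ rev [r+1..<n+1]) = n" using sd rn by simp
  ultimately show ?thesis using st sd z unfolding CW_def by simp
qed

lemma app_nth_tail:
  assumes "length s = r" "r \<le> i" "i < n"
  shows "(s @ rev [r+1..<n+1]) ! i = n + r - i"
proof -
  have "(s @ rev [r+1..<n+1]) ! i = rev [r+1..<n+1] ! (i - r)" using assms by (simp add: nth_append)
  also have "\<dots> = [r+1..<n+1] ! (n - r - 1 - (i - r))" using assms by (simp add: rev_nth del: upt_Suc)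
  also have "\<dots> = n + r - i" using assms by (simp del: upt_Suc)
  finally show ?thesis .
qed

lemma app_no_occ:
  assumes s: "s \<in> CW r" and s1: "s ! 1 = r" and r: "2 \<le> r" "r < n" and nc: "\<not> cyc_occ s"
  shows "\<not> cyc_occ (s @ rev [r+1..<n+1])"
proof
  let ?c = "s @ rev [r+1..<n+1]"
  have sd: "distinct s" "set s = {1..r}" "length s = r" "s ! 0 = 1" using s by (auto simp: CW_def)
  have lc: "length ?c = n" using sd r by simp
  have V1: "?c ! i = s ! i" "1 \<le> ?c ! i" "?c ! i \<le> r" if "i < r" for i
  proof -
    show e: "?c ! i = s ! i" using that sd by (simp add: nth_append)
    have "s ! i \<in> {1..r}" using CW_vals[OF s that] .
    then show "1 \<le> ?c ! i" "?c ! i \<le> r" using e by simp_all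
  qed
  have V2: "?c ! i = n + r - i" if "r \<le> i" "i < n" for i
    using app_nth_tail[OF sd(3) that] .
  have V2': "r < ?c ! i" if "r \<le> i" "i < n" for i using V2[OF that] that by simp
  have V3: "?c ! j < ?c ! i" if "r \<le> i" "i < j" "j < n" for i j
    using V2[OF that(1) order.strict_trans[OF that(2,3)]] V2[of j] that by simp
  assume "cyc_occ ?c"
  then obtain a b x d where o: "a < n" "b < n" "x < n" "d < n" "cyc_ord a b x d"
    "?c ! a < ?c ! d" "?c ! d < ?c ! b" "?c ! b < ?c ! x"
    unfolding cyc_occ_def lc by blast
  have big: "r \<le> j" if "j < n" "r < ?c ! j" for j
  proof (rule ccontr)
    assume "\<not> r \<le> j" then have "j < r" by simp
    then show False using V1(3)[of j] that by simp
  qed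
  show False
  proof (cases "r \<le> a")
    case True
    have "r < ?c ! d" "r < ?c ! b" "r < ?c ! x" using V2'[OF True o(1)] o by linarith+
    then have "r \<le> d" "r \<le> b" "r \<le> x" using big[OF o(4)] big[OF o(2)] big[OF o(3)] by simp_all
    then show False using o(5) V3[of a b] V3[of b x] o(1-4,6-8) True unfolding cyc_ord_def by (meson not_less_iff_gr_or_eq order.strict_trans)
  next
    case a: False
    show False
    proof (cases "r \<le> d")
      case True
      have "r < ?c ! b" "r < ?c ! x" using V2'[OF True o(4)] o by linarith+
      then have "r \<le> b" "r \<le> x" using big[OF o(2)] big[OF o(3)] by simp_all
      then show False using o(5) V3[of b x] o(1-4,6-8) True a unfolding cyc_ord_def by auto
    next
      case d: False
      show False
      proof (cases "r \<le> b")
        case True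
        have "r < ?c ! x" using V2'[OF True o(2)] o by linarith
        then have "r \<le> x" using big[OF o(3)] by simp
        then show False using o(5) V3[of b x] o(1-4,6-8) True a d unfolding cyc_ord_def by auto
      next
        case b: False
        show False
        proof (cases "r \<le> x")
          case True
          have ord: "d < a" "a < b" using o(5) True a b d unfolding cyc_ord_def by auto
          have "d \<noteq> 0"
          proof
            assume "d = 0"
            then have "?c ! d = 1" using V1(1)[of 0] sd r by simp
            moreover have "1 \<le> ?c ! a" using V1(2)[of a] a by simp
            ultimately show False using o(6) by simp
          qed
          moreover have "d \<noteq> 1"
          proof
            assume "d = 1"
            then have "?c ! d = r" using V1(1)[of 1] s1 r by simp
            then show False using o(7) V1(3)[of b] b by simp
          qed
          ultimately have d2: "1 < d" by simp
          have "s ! b \<noteq> r"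
          proof
            assume "s ! b = r"
            then have "b = 1" using CW_inj[OF s, of b 1] s1 b r by simp
            then show False using d2 ord by simp
          qed
          then have sb: "s ! b < r" using V1[of b] b by simp
          have "cyc_ord a b 1 d" using ord d2 unfolding cyc_ord_def by simp
          then have "cyc_occ s" unfolding cyc_occ_def using o V1(1)[of a] V1(1)[of b] V1(1)[of d] a b d sb s1 sd r
            by (intro exI[of _ a] exI[of _ b] exI[of _ 1] exI[of _ d]) simp
          then show False using nc by simp
        next
          case x: False
          have "cyc_occ s" unfolding cyc_occ_def using o V1(1)[of a] V1(1)[of b] V1(1)[of d] V1(1)[of x] a b d x sd
            by (intro exI[of _ a] exI[of _ b] exI[of _ x] exI[of _ d]) simp
          then show False using nc by simp
        qed
      qed
    qed
  qed
qed



lemma dec_take: "dec xs I \<Longrightarrow> dec xs (take t I)"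
  unfolding dec_def by (auto simp: sorted_wrt_take dest: in_set_takeD)

lemma Ylemma:
  fixes X Y :: "nat list"
  assumes lX: "length X = r" and vX: "\<forall>i<r. 1 \<le> X ! i \<and> X ! i \<le> r"
    and iX: "\<forall>i<r. \<forall>j<r. X ! i = X ! j \<longrightarrow> i = j" and X0: "X ! 0 = r"
    and p: "p < r" "X ! p = 1" and q: "q < r" "X ! q = 2" "p < q" and rn: "r < n"
    and lY: "length Y = n" and Y1: "\<forall>i<r. i \<noteq> p \<longrightarrow> Y ! i = X ! i" and Yp: "Y ! p = n"
    and Yr: "Y ! r = 1" and Y2: "\<forall>i. r < i \<and> i < n \<longrightarrow> Y ! i = i" and k: "k \<ge> 2"
  shows "hasdec Y k \<longleftrightarrow> hasdec X (k - 1)"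
proof
  assume "hasdec Y k"
  then obtain I where d: "dec Y I" and l: "length I = k" unfolding hasdec_def by blast
  have sI: "sorted_wrt (<) I" and bI: "\<forall>i\<in>set I. i < n" and vI: "sorted_wrt (\<lambda>i j. Y ! j < Y ! i) I"
    using d lY unfolding dec_def by auto
  let ?J = "take (k - 1) I"
  have dJ: "dec Y ?J" using dec_take[OF d] .
  have lJ: "length ?J = k - 1" using l by simp
  have Jr: "\<forall>i\<in>set ?J. i < r"
  proof
    fix u assume u: "u \<in> set ?J"
    then obtain t where t: "t < k - 1" "?J ! t = u" using lJ by (metis in_set_conv_nth)
    then have ut: "I ! t = u" by simp
    let ?v = "I ! (k - 1)"
    have tk: "t < k - 1" "k - 1 < length I" using t l k by auto
    have uv: "u < ?v" using sI[unfolded sorted_wrt_iff_nth_less, rule_format, OF tk] ut by simp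
    have vals: "Y ! ?v < Y ! u" using vI[unfolded sorted_wrt_iff_nth_less, rule_format, OF tk] ut by simp
    have vn: "?v < n" using bI tk by simp
    show "u < r"
    proof (rule ccontr)
      assume "\<not> u < r"
      then have "r < ?v" using uv by simp
      then have "Y ! ?v = ?v" using Y2 vn by simp
      moreover have "Y ! u \<le> u"
      proof (cases "u = r")
        case True then show ?thesis using Yr rn p by simp
      next
        case False then show ?thesis using Y2 \<open>\<not> u < r\<close> uv vn by simp
      qed
      ultimately show False using vals uv by simp
    qed
  qed
  have sJ: "sorted_wrt (<) ?J" and vJ: "sorted_wrt (\<lambda>i j. Y ! j < Y ! i) ?J"
    using dJ unfolding dec_def by auto
  show "hasdec X (k - 1)"
  proof (cases "p \<in> set ?J")
    case False
    have R: "X ! y < X ! x" if "x \<in> set ?J" "y \<in> set ?J" "Y ! y < Y ! x" for x y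
    proof -
      have "x < r" "y < r" "x \<noteq> p" "y \<noteq> p" using that Jr False by auto
      then have "Y ! x = X ! x" "Y ! y = X ! y" using Y1 by auto
      then show ?thesis using that(3) by simp
    qed
    have "sorted_wrt (\<lambda>i j. X ! j < X ! i) ?J"
      using vJ by (rule sorted_wrt_mono_rel[rotated]) (rule R)
    then have "dec X ?J" using sJ Jr lX unfolding dec_def by auto
    then show ?thesis using lJ unfolding hasdec_def by blast
  next
    case True
    obtain j0 J1 where J: "?J = j0 # J1" using True by (cases ?J) auto
    have "j0 = p"
    proof (rule ccontr)
      assume "j0 \<noteq> p"
      then have "p \<in> set J1" using True J by simp
      then have "Y ! p < Y ! j0" using vJ J by simp
      moreover have "j0 < r" using Jr J by simp
      ultimately show False using Y1 Yp vX rn \<open>j0 \<noteq> p\<close> by force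
    qed
    have J1p: "\<forall>j\<in>set J1. p < j" using sJ J \<open>j0 = p\<close> by simp
    have J1r: "\<forall>j\<in>set J1. j < r" using Jr J by simp
    have vJ1: "sorted_wrt (\<lambda>i j. Y ! j < Y ! i) J1" using vJ J by simp
    have sJ1: "sorted_wrt (<) J1" using sJ J by simp
    let ?K = "0 # J1"
    have "sorted_wrt (<) ?K" using sJ1 J1p by auto
    moreover have "\<forall>i\<in>set ?K. i < length X" using J1r lX p by auto
    moreover have "sorted_wrt (\<lambda>i j. X ! j < X ! i) ?K"
    proof -
      have a: "\<forall>j\<in>set J1. X ! j < X ! 0"
      proof
        fix j assume j: "j \<in> set J1"
        then have "j < r" "j \<noteq> 0" using J1r J1p by auto
        then have "X ! j \<noteq> X ! 0" "X ! j \<le> r" using iX vX p by auto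
        then show "X ! j < X ! 0" using X0 by simp
      qed
      have R: "X ! y < X ! x" if "x \<in> set J1" "y \<in> set J1" "Y ! y < Y ! x" for x y
      proof -
        have "x < r" "y < r" "x \<noteq> p" "y \<noteq> p" using that J1r J1p by auto
        then have "Y ! x = X ! x" "Y ! y = X ! y" using Y1 by auto
        then show ?thesis using that(3) by simp
      qed
      have b: "sorted_wrt (\<lambda>i j. X ! j < X ! i) J1"
        using vJ1 by (rule sorted_wrt_mono_rel[rotated]) (rule R)
      show ?thesis using a b by simp
    qed
    ultimately have "dec X ?K" unfolding dec_def by blast
    moreover have "length ?K = k - 1" using lJ arg_cong[OF J, of length] by (simp only: length_Cons)
    ultimately show ?thesis unfolding hasdec_def by blast
  qed
next
  assume "hasdec X (k - 1)"
  then obtain I where d: "dec X I" and l: "length I = k - 1" unfolding hasdec_def by blast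
  have sI: "sorted_wrt (<) I" and bI: "\<forall>i\<in>set I. i < r" and vI: "sorted_wrt (\<lambda>i j. X ! j < X ! i) I"
    using d lX unfolding dec_def by auto
  obtain I' where dI': "dec X I'" and lI': "length I' = k - 1" and pI': "p \<notin> set I'"
  proof (cases "p \<in> set I")
    case False then show ?thesis using that d l by blast
  next
    case True
    obtain I0 I1 where sp: "I = I0 @ p # I1" using True by (metis split_list)
    have "I1 = []"
    proof (rule ccontr)
      assume "I1 \<noteq> []"
      then obtain j where j: "j \<in> set I1" by (cases I1) auto
      then have "X ! j < X ! p" using vI sp by (simp add: sorted_wrt_append)
      moreover have "j < r" using bI sp j by simp
      ultimately show False using vX p by force
    qed
    then have sp': "I = I0 @ [p]" using sp by simp
    have I0p: "\<forall>i\<in>set I0. i < p" using sI sp' by (simp add: sorted_wrt_append)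
    have I0r: "\<forall>i\<in>set I0. i < r" using bI sp' by simp
    let ?I = "I0 @ [q]"
    have "sorted_wrt (<) ?I" using sI sp' I0p q by (auto simp: sorted_wrt_append)
    moreover have "\<forall>i\<in>set ?I. i < length X" using I0r q lX by auto
    moreover have "sorted_wrt (\<lambda>i j. X ! j < X ! i) ?I"
    proof -
      have a: "sorted_wrt (\<lambda>i j. X ! j < X ! i) I0" using vI sp' by (simp add: sorted_wrt_append)
      have b: "\<forall>i\<in>set I0. X ! q < X ! i"
      proof
        fix i assume i: "i \<in> set I0"
        then have "i < r" "i \<noteq> p" "i \<noteq> q" using I0r I0p q by auto
        then have "X ! i \<noteq> 1" "X ! i \<noteq> 2" using iX p q by metis+
        then show "X ! q < X ! i" using vX \<open>i < r\<close> q by force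
      qed
      show ?thesis using a b by (simp add: sorted_wrt_append)
    qed
    ultimately have "dec X ?I" unfolding dec_def by blast
    moreover have "length ?I = k - 1" using l sp' by simp
    moreover have "p \<notin> set ?I" using I0p q by auto
    ultimately show ?thesis using that by blast
  qed
  have sI': "sorted_wrt (<) I'" and bI': "\<forall>i\<in>set I'. i < r" and vI': "sorted_wrt (\<lambda>i j. X ! j < X ! i) I'"
    using dI' lX unfolding dec_def by auto
  let ?K = "I' @ [r]"
  have "sorted_wrt (<) ?K" using sI' bI' by (simp add: sorted_wrt_append)
  moreover have "\<forall>i\<in>set ?K. i < length Y" using bI' rn lY by auto
  moreover have "sorted_wrt (\<lambda>i j. Y ! j < Y ! i) ?K"
  proof -
    have R: "Y ! y < Y ! x" if "x \<in> set I'" "y \<in> set I'" "X ! y < X ! x" for x y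
    proof -
      have "x < r" "y < r" "x \<noteq> p" "y \<noteq> p" using that bI' pI' by auto
      then have "Y ! x = X ! x" "Y ! y = X ! y" using Y1 by auto
      then show ?thesis using that(3) by simp
    qed
    have a: "sorted_wrt (\<lambda>i j. Y ! j < Y ! i) I'"
      using vI' by (rule sorted_wrt_mono_rel[rotated]) (rule R)
    have b: "\<forall>i\<in>set I'. Y ! r < Y ! i"
    proof
      fix i assume i: "i \<in> set I'"
      then have "i < r" "i \<noteq> p" using bI' pI' by auto
      then have "X ! i \<noteq> 1" "Y ! i = X ! i" using iX p Y1 by metis+
      then show "Y ! r < Y ! i" using vX \<open>i < r\<close> Yr by force
    qed
    show ?thesis using a b by (simp add: sorted_wrt_append)
  qed
  ultimately have "dec Y ?K" unfolding dec_def by blast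
  moreover have "length ?K = k" using lI' k by simp
  ultimately show "hasdec Y k" unfolding hasdec_def by blast
qed



lemma one_line_nth: "i < n \<Longrightarrow> one_line n \<pi> ! i = \<pi> (Suc i)"
  by (simp add: one_line_def del: upt_Suc)

lemma length_one_line[simp]: "length (one_line n \<pi>) = n"
  by (simp add: one_line_def)

lemma X_facts:
  assumes s: "s \<in> CW r" and s1: "s ! 1 = r" and r: "2 \<le> r"
  defines "X \<equiv> one_line r (perm_of s)"
  shows "length X = r" "\<forall>i<r. 1 \<le> X ! i \<and> X ! i \<le> r"
    "\<forall>i<r. \<forall>j<r. X ! i = X ! j \<longrightarrow> i = j" "X ! 0 = r"
    "s ! (r - 1) - 1 < r" "X ! (s ! (r - 1) - 1) = 1" "\<exists>q<r. X ! q = 2"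
proof -
  have sd: "distinct s" "set s = {1..r}" "length s = r" "s ! 0 = 1" using s by (auto simp: CW_def)
  have pp: "perm_of s permutes {1..r}" using perm_of_permutes[OF s] r by simp
  show "length X = r" by (simp add: X_def)
  show "\<forall>i<r. 1 \<le> X ! i \<and> X ! i \<le> r"
  proof (intro allI impI)
    fix i assume "i < r"
    then have "perm_of s (Suc i) \<in> {1..r}" using permutes_in_image[OF pp] by simp
    then show "1 \<le> X ! i \<and> X ! i \<le> r" using \<open>i < r\<close> by (simp add: X_def one_line_nth)
  qed
  show "\<forall>i<r. \<forall>j<r. X ! i = X ! j \<longrightarrow> i = j"
  proof (intro allI impI)
    fix i j assume "i < r" "j < r" "X ! i = X ! j"
    then have "perm_of s (Suc i) = perm_of s (Suc j)" by (simp add: X_def one_line_nth)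
    then have "Suc i = Suc j" using permutes_inj[OF pp] unfolding inj_def by blast
    then show "i = j" by simp
  qed
  show "X ! 0 = r" using perm_of_1[OF s] s1 r by (simp add: X_def one_line_nth)
  have sr: "s ! (r - 1) \<in> {1..r}" using CW_vals[OF s, of "r - 1"] r by simp
  then show "s ! (r - 1) - 1 < r" by auto
  have e0: "X ! (s ! (r - 1) - 1) = perm_of s (Suc (s ! (r - 1) - 1))"
    unfolding X_def by (rule one_line_nth) (use sr in auto)
  have "Suc (s ! (r - 1) - 1) = s ! (r - 1)" using sr by auto
  then have "X ! (s ! (r - 1) - 1) = perm_of s (s ! (r - 1))" using e0 by simp
  also have "\<dots> = s ! (Suc (r - 1) mod r)" using perm_of_nth[OF sd(1), of "r - 1"] sd r by simp
  also have "\<dots> = 1" using sd r by simp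
  finally show "X ! (s ! (r - 1) - 1) = 1" .
  have "2 \<in> {1..r}" using r by simp
  then obtain x where x: "x \<in> {1..r}" "perm_of s x = 2" using permutes_surj[OF pp] 
    by (metis pp permutes_image image_iff)
  then have "X ! (x - 1) = 2" "x - 1 < r" by (auto simp: X_def one_line_nth)
  then show "\<exists>q<r. X ! q = 2" by blast
qed

lemma Y_facts:
  assumes s: "s \<in> CW r" and s1: "s ! 1 = r" and r: "2 \<le> r" "r < n"
  defines "X \<equiv> one_line r (perm_of s)" and "Y \<equiv> one_line n (perm_of (s @ rev [r+1..<n+1]))"
    and "p \<equiv> s ! (r - 1) - 1"
  shows "length Y = n" "\<forall>i<r. i \<noteq> p \<longrightarrow> Y ! i = X ! i" "Y ! p = n" "Y ! r = 1"
    "\<forall>i. r < i \<and> i < n \<longrightarrow> Y ! i = i"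
proof -
  let ?c = "s @ rev [r+1..<n+1]"
  have sd: "distinct s" "set s = {1..r}" "length s = r" "s ! 0 = 1" using s by (auto simp: CW_def)
  have cw: "?c \<in> CW n" using app_CW[OF s r(2)] r by simp
  have cd: "distinct ?c" "length ?c = n" using cw by (auto simp: CW_def)
  have cs: "?c ! j = s ! j" if "j < r" for j using that sd by (simp add: nth_append)
  have ct: "?c ! j = n + r - j" if "r \<le> j" "j < n" for j using app_nth_tail[OF sd(3) that] .
  have pc: "perm_of ?c (?c ! j) = ?c ! (Suc j mod n)" if "j < n" for j
    using perm_of_nth[OF cd(1), of j] that cd by simp
  show "length Y = n" by (simp add: Y_def)
  have sr: "s ! (r - 1) \<in> {1..r}" using CW_vals[OF s, of "r - 1"] r by simp
  have Sp: "Suc p = s ! (r - 1)" using sr by (auto simp: p_def)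
  show "\<forall>i<r. i \<noteq> p \<longrightarrow> Y ! i = X ! i"
  proof (intro allI impI)
    fix i assume i: "i < r" "i \<noteq> p"
    have "Suc i \<in> set s" using sd i by simp
    then obtain j where j: "j < r" "s ! j = Suc i" using sd(3) by (metis in_set_conv_nth)
    have jr: "j \<noteq> r - 1" using j i Sp by auto
    then have sj: "Suc j < r" using j by simp
    have "Y ! i = perm_of ?c (?c ! j)" using i r j cs[of j] by (simp add: Y_def one_line_nth)
    also have "\<dots> = ?c ! Suc j" using pc[of j] j r sj by simp
    also have "\<dots> = s ! Suc j" using cs[OF sj] .
    also have "\<dots> = perm_of s (s ! j)" using perm_of_nth[OF sd(1), of j] sj sd by simp
    also have "\<dots> = X ! i" using i j by (simp add: X_def one_line_nth)
    finally show "Y ! i = X ! i" .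
  qed
  have pr: "p < r" using sr by (auto simp: p_def)
  have "Y ! p = perm_of ?c (?c ! (r - 1))" using pr r cs[of "r - 1"] Sp by (simp add: Y_def one_line_nth)
  also have "\<dots> = ?c ! r" using pc[of "r - 1"] r by simp
  also have "\<dots> = n" using ct[of r] r by simp
  finally show "Y ! p = n" .
  have "Y ! r = perm_of ?c (?c ! (n - 1))" using ct[of "n - 1"] r by (simp add: Y_def one_line_nth)
  also have "\<dots> = ?c ! 0" using pc[of "n - 1"] r by simp
  also have "\<dots> = 1" using cs[of 0] sd r by simp
  finally show "Y ! r = 1" .
  show "\<forall>i. r < i \<and> i < n \<longrightarrow> Y ! i = i"
  proof (intro allI impI)
    fix i assume i: "r < i \<and> i < n"
    let ?j = "n + r - Suc i"
    have j: "r \<le> ?j" "Suc ?j < n" using i by auto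
    have "Y ! i = perm_of ?c (?c ! ?j)" using i ct[of ?j] j by (simp add: Y_def one_line_nth)
    also have "\<dots> = ?c ! Suc ?j" using pc[of ?j] j by simp
    also have "\<dots> = i" using ct[of "Suc ?j"] j i by simp
    finally show "Y ! i = i" .
  qed
qed



lemma Lprime:
  assumes s: "s \<in> CW r" and s1: "s ! 1 = r" and r: "3 \<le> r" and nc: "\<not> cyc_occ s"
    and q: "q < r" "one_line r (perm_of s) ! q = 2"
  shows "s ! (r - 1) - 1 < q"
proof -
  have sd: "distinct s" "set s = {1..r}" "length s = r" "s ! 0 = 1" using s by (auto simp: CW_def)
  have inj: "s ! i = s ! j \<longleftrightarrow> i = j" if "i < r" "j < r" for i j using CW_inj[OF s that] .
  have vals: "s ! i \<in> {1..r}" if "i < r" for i using CW_vals[OF s that] .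
  have pq: "perm_of s (Suc q) = 2" using q by (simp add: one_line_nth)
  have "Suc q \<in> set s" using sd q by simp
  then obtain j where j: "j < r" "s ! j = Suc q" using sd(3) by (metis in_set_conv_nth)
  have e: "s ! (Suc j mod r) = 2" using perm_of_nth[OF sd(1), of j] j sd pq by simp
  have sj: "Suc j < r"
  proof (rule ccontr)
    assume "\<not> Suc j < r" then have "Suc j = r" using j by simp
    then show False using e sd by simp
  qed
  have e2: "s ! Suc j = 2" using e sj by simp
  have j1: "j \<noteq> 0"
  proof assume "j = 0" then show False using e2 s1 r by simp qed
  have sj3: "s ! j \<ge> 3"
  proof -
    have "s ! j \<noteq> 1" using inj[of j 0] j j1 sd r by auto
    moreover have "s ! j \<noteq> 2" using inj[of j "Suc j"] j sj e2 by auto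
    moreover have "s ! j \<ge> 1" using vals[of j] j by simp
    ultimately show ?thesis by simp
  qed
  have sr: "s ! (r - 1) \<in> {1..r}" using vals[of "r - 1"] r by simp
  have main: "s ! (r - 1) < s ! j"
  proof (cases "Suc j = r - 1")
    case True
    then show ?thesis using e2 sj3 by simp
  next
    case False
    then have sj': "Suc j < r - 1" using sj by simp
    show ?thesis
    proof (rule ccontr)
      assume "\<not> s ! (r - 1) < s ! j"
      moreover have "s ! (r - 1) \<noteq> s ! j" using inj[of "r - 1" j] j sj' r by auto
      ultimately have lt: "s ! j < s ! (r - 1)" by simp
      have rr: "s ! (r - 1) \<noteq> r" using inj[of "r - 1" 1] s1 r by auto
      then have br: "s ! (r - 1) < r" using sr by simp
      have "j \<noteq> 1" using lt s1 br by auto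
      then have j2: "1 < j" using j1 by simp
      have "cyc_ord (Suc j) (r - 1) 1 j" using j2 sj' unfolding cyc_ord_def by simp
      then have "cyc_occ s" unfolding cyc_occ_def using e2 sj3 lt br s1 sd sj' j r
        by (intro exI[of _ "Suc j"] exI[of _ "r - 1"] exI[of _ 1] exI[of _ j]) simp
      then show False using nc by simp
    qed
  qed
  then show ?thesis using j sr by auto
qed

lemma Gr_card:
  assumes r: "3 \<le> r" "r < n" and k: "k \<ge> 3"
  shows "card {c \<in> Good n k. c ! 1 = r} = card {s \<in> Good r (k - 1). s ! 1 = r}"
proof -
  let ?f = "\<lambda>s. s @ rev [r+1..<n+1]"
  have inj: "inj_on ?f {s \<in> Good r (k - 1). s ! 1 = r}" by (rule inj_onI) simp
  have key: "?f s \<in> Good n k \<longleftrightarrow> s \<in> Good r (k - 1)" if s: "s \<in> CW r" and s1: "s ! 1 = r" for s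
  proof -
    have sd: "length s = r" using s by (simp add: CW_def)
    have cw: "?f s \<in> CW n" using app_CW[OF s r(2)] r by simp
    show ?thesis
    proof (cases "cyc_occ s")
      case True
      have "cyc_occ (?f s)" using cyc_occ_take[of r "?f s"] True sd by simp
      then show ?thesis using True by (simp add: Good_def)
    next
      case False
      have nc: "\<not> cyc_occ (?f s)" using app_no_occ[OF s s1 _ r(2) False] r by simp
      have r2: "2 \<le> r" using r by simp
      note X = X_facts[OF s s1 r2]
      note Y = Y_facts[OF s s1 r2 r(2)]
      obtain q where q: "q < r" "one_line r (perm_of s) ! q = 2" using X(7) by blast
      have pq: "s ! (r - 1) - 1 < q" using Lprime[OF s s1 r(1) False q] .
      have "hasdec (one_line n (perm_of (?f s))) k \<longleftrightarrow> hasdec (one_line r (perm_of s)) (k - 1)"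
        by (rule Ylemma[OF X(1-6) q pq r(2) Y]) (use k in simp)
      then show ?thesis using nc False cw s by (simp add: Good_def)
    qed
  qed
  have "?f ` {s \<in> Good r (k - 1). s ! 1 = r} = {c \<in> Good n k. c ! 1 = r}"
  proof
    show "?f ` {s \<in> Good r (k - 1). s ! 1 = r} \<subseteq> {c \<in> Good n k. c ! 1 = r}"
    proof
      fix c assume "c \<in> ?f ` {s \<in> Good r (k - 1). s ! 1 = r}"
      then obtain s where s: "s \<in> Good r (k - 1)" "s ! 1 = r" "c = ?f s" by blast
      then have sc: "s \<in> CW r" by (simp add: Good_def)
      then have "length s = r" by (simp add: CW_def)
      then have "c ! 1 = r" using s r by (simp add: nth_append)
      then show "c \<in> {c \<in> Good n k. c ! 1 = r}" using key[OF sc s(2)] s by simp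
    qed
    show "{c \<in> Good n k. c ! 1 = r} \<subseteq> ?f ` {s \<in> Good r (k - 1). s ! 1 = r}"
    proof
      fix c assume c: "c \<in> {c \<in> Good n k. c ! 1 = r}"
      then have cw: "c \<in> CW n" and c1: "c ! 1 = r" and nc: "\<not> cyc_occ c" and g: "c \<in> Good n k"
        by (auto simp: Good_def)
      note S = struct_r[OF cw c1 r nc]
      have ceq: "c = ?f (take r c)" using S(1) by (metis append_take_drop_id)
      have t1: "take r c ! 1 = r" using c1 r by simp
      have "take r c \<in> Good r (k - 1)" using key[OF S(2) t1] g ceq by simp
      then show "c \<in> ?f ` {s \<in> Good r (k - 1). s ! 1 = r}" using ceq t1 by blast
    qed
  qed
  then show ?thesis using card_image[OF inj] by simp
qed



lemma finite_Good: "finite (Good n k)"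
proof -
  have "Good n k \<subseteq> {xs. set xs \<subseteq> {1..n} \<and> length xs = n}" by (auto simp: Good_def CW_def)
  moreover have "finite {xs. set xs \<subseteq> {1..n} \<and> length xs = n}" by (rule finite_lists_length_eq) simp
  ultimately show ?thesis by (rule finite_subset)
qed

lemma second_range:
  assumes "c \<in> Good n k" "n \<ge> 2"
  shows "c ! 1 \<in> {2..n}"
proof -
  have cw: "c \<in> CW n" using assms by (simp add: Good_def)
  have "c ! 1 \<in> {1..n}" using CW_vals[OF cw, of 1] assms by simp
  moreover have "c ! 1 \<noteq> 1" using CW_inj[OF cw, of 1 0] assms cw by (simp add: CW_def)
  ultimately show ?thesis by auto
qed

theorem lemma3p6:
  fixes n k :: nat
  assumes "n \<ge> 5" and "k \<ge> 4"
  shows "a_circ_1342 n k = a_circ_1342 (n - 1) k + b_circ_1342 n k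
           + (\<Sum>r = 3..n - 1. b_circ_1342 r (k - 1))"
proof -
  let ?G = "Good n k"
  let ?C = "\<lambda>v. card {c \<in> ?G. c ! 1 = v}"
  have "card ?G = (\<Sum>v\<in>{2..n}. ?C v)"
  proof -
    have "(\<Sum>v\<in>{2..n}. \<Sum>x\<in>{x \<in> ?G. x ! 1 = v}. (1::nat)) = (\<Sum>x\<in>?G. 1)"
      by (rule sum.group[OF finite_Good]) (use second_range assms in auto)
    then show ?thesis by simp
  qed
  also have "{2..n} = insert 2 (insert n {3..n - 1})" using assms by auto
  also have "(\<Sum>v\<in>insert 2 (insert n {3..n - 1}). ?C v) = ?C 2 + (?C n + (\<Sum>v\<in>{3..n - 1}. ?C v))"
    using assms by (simp add: sum.insert)
  finally have e: "card ?G = ?C 2 + (?C n + (\<Sum>v\<in>{3..n - 1}. ?C v))" .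
  have "card ?G = a_circ_1342 n k" using a_eq[of n k] assms by simp
  moreover have "?C 2 = a_circ_1342 (n - 1) k"
    using G2_card[of n k] a_eq[of "n - 1" k] assms by simp
  moreover have "?C n = b_circ_1342 n k" using b_eq[of n k] assms by simp
  moreover have "(\<Sum>v\<in>{3..n - 1}. ?C v) = (\<Sum>r = 3..n - 1. b_circ_1342 r (k - 1))"
  proof (rule sum.cong[OF refl])
    fix r assume "r \<in> {3..n - 1}"
    then have r: "3 \<le> r" "r < n" using assms by auto
    show "?C r = b_circ_1342 r (k - 1)" using Gr_card[OF r, of k] b_eq[of r "k - 1"] r assms by simp
  qed
  ultimately show ?thesis using e by simp
qed


end
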